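(* Let $\mathbb{L}_0$ and $\mathbb{L}_1$ be generators of Lindblad form on $M_d(\mathbb{C})$ and, for $\varepsilon\ge 0$, let $\mathbb{L}_\varepsilon=\mathbb{L}_0+\varepsilon\,\mathbb{L}_1$, generating the semigroup $\gamma^{(\varepsilon)}_t=e^{t\mathbb{L}_\varepsilon}$. Let $n(\varepsilon)$ denote the maximal number of mutually orthogonal density matrices $\rho_1,\dots,\rho_n$ (i.e. $\rho_j\rho_k=0$ for $j\neq k$) that are $\gamma^{(\varepsilon)}_t$-invariant, i.e. satisfy $\mathbb{L}_\varepsilon[\rho_j]=0$. Then $n(0)\ge n(\varepsilon)$ for all $\varepsilon$ with $0<\varepsilon\ll 1$ (i.e. for all sufficiently small $\varepsilon>0$).
   Context: A generator of Lindblad form on $M_d(\mathbb{C})$ is a linear map $\mathbb{L}[\rho]=-i[H,\rho]+\sum_\alpha\big(h_\alpha\rho h_\alpha^\dagger-\tfrac12\{h_\alpha^\dagger h_\alpha,\rho\}\big)$ with $H=H^\dagger\in M_d(\mathbb{C})$ and $h_\alpha\in M_d(\mathbb{C})$; it generates a semigroup $e^{t\mathbb{L}}$ of completely positive trace-preserving maps. A density matrix is a positive semidefinite matrix of trace one. *)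

theory Defs
  imports "HOL-Analysis.Analysis"
begin

text \<open>Matrices in M_d(C) are represented as complex^'d^'d, the dimension d = CARD('d).\<close>

type_synonym 'd cmat = "complex^'d^'d"

definition smat :: "complex \<Rightarrow> 'd::finite cmat \<Rightarrow> 'd cmat" where
  "smat c A = (\<chi> i j. c * A $ i $ j)"

definition adj :: "'d::finite cmat \<Rightarrow> 'd cmat" where
  "adj A = (\<chi> i j. cnj (A $ j $ i))"

definition hermitian :: "'d::finite cmat \<Rightarrow> bool" where
  "hermitian A \<longleftrightarrow> adj A = A"

definition cquad :: "'d::finite cmat \<Rightarrow> complex^'d \<Rightarrow> complex" where
  "cquad A x = (\<Sum>i\<in>UNIV. \<Sum>j\<in>UNIV. cnj (x $ i) * A $ i $ j * x $ j)"

definition psd :: "'d::finite cmat \<Rightarrow> bool" where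
  "psd A \<longleftrightarrow> hermitian A \<and> (\<forall>x. Im (cquad A x) = 0 \<and> Re (cquad A x) \<ge> 0)"

definition ctrace :: "'d::finite cmat \<Rightarrow> complex" where
  "ctrace A = (\<Sum>i\<in>UNIV. A $ i $ i)"

definition density :: "'d::finite cmat \<Rightarrow> bool" where
  "density \<rho> \<longleftrightarrow> psd \<rho> \<and> ctrace \<rho> = 1"

definition lindblad :: "'d::finite cmat \<Rightarrow> 'd cmat list \<Rightarrow> 'd cmat \<Rightarrow> 'd cmat" where
  "lindblad H hs \<rho> =
     smat (- \<i>) (H ** \<rho> - \<rho> ** H)
     + (\<Sum>h\<leftarrow>hs. h ** \<rho> ** adj h
                 - smat (1/2) (adj h ** h ** \<rho> + \<rho> ** (adj h ** h)))"

definition lindblad_form :: "('d::finite cmat \<Rightarrow> 'd cmat) \<Rightarrow> bool" where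
  "lindblad_form L \<longleftrightarrow> (\<exists>H hs. hermitian H \<and> L = lindblad H hs)"

definition orth_invariant_family :: "('d::finite cmat \<Rightarrow> 'd cmat) \<Rightarrow> 'd cmat list \<Rightarrow> bool" where
  "orth_invariant_family L \<rho>s \<longleftrightarrow>
     (\<forall>\<rho>\<in>set \<rho>s. density \<rho> \<and> L \<rho> = 0) \<and>
     (\<forall>j<length \<rho>s. \<forall>k<length \<rho>s. j \<noteq> k \<longrightarrow> \<rho>s ! j ** \<rho>s ! k = 0)"

definition max_orth_invariant :: "('d::finite cmat \<Rightarrow> 'd cmat) \<Rightarrow> nat" where
  "max_orth_invariant L = Max {n. \<exists>\<rho>s. length \<rho>s = n \<and> orth_invariant_family L \<rho>s}"

definition perturbed :: "('d::finite cmat \<Rightarrow> 'd cmat) \<Rightarrow> ('d cmat \<Rightarrow> 'd cmat) \<Rightarrow> real \<Rightarrow> 'd cmat \<Rightarrow> 'd cmat" where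
  "perturbed L0 L1 \<epsilon> \<rho> = L0 \<rho> + smat (complex_of_real \<epsilon>) (L1 \<rho>)"

end

theory Submission
  imports Defs
begin


lemma tendsto_mmul:
  fixes A B :: "'a \<Rightarrow> 'd::finite cmat"
  assumes "(A \<longlongrightarrow> a) F" "(B \<longlongrightarrow> b) F"
  shows "((\<lambda>x. A x ** B x) \<longlongrightarrow> a ** b) F"
  apply (rule vec_tendstoI)+
  unfolding matrix_matrix_mult_def
  by (simp, intro tendsto_intros assms)

lemma tendsto_smat:
  fixes A :: "'a \<Rightarrow> 'd::finite cmat"
  assumes "(A \<longlongrightarrow> a) F" "(c \<longlongrightarrow> c0) F"
  shows "((\<lambda>x. smat (c x) (A x)) \<longlongrightarrow> smat c0 a) F"
  apply (rule vec_tendstoI)+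
  unfolding smat_def
  by (simp, intro tendsto_intros assms)

lemma tendsto_adj:
  fixes A :: "'a \<Rightarrow> 'd::finite cmat"
  assumes "(A \<longlongrightarrow> a) F"
  shows "((\<lambda>x. adj (A x)) \<longlongrightarrow> adj a) F"
  apply (rule vec_tendstoI)+
  unfolding adj_def
  by (simp, intro tendsto_intros assms)

lemma tendsto_lindblad:
  fixes A :: "'a \<Rightarrow> 'd::finite cmat"
  assumes "(A \<longlongrightarrow> a) F"
  shows "((\<lambda>x. lindblad H hs (A x)) \<longlongrightarrow> lindblad H hs a) F"
proof -
  have "((\<lambda>x. (\<Sum>h\<leftarrow>hs. h ** A x ** adj h
                 - smat (1/2) (adj h ** h ** A x + A x ** (adj h ** h)))) \<longlongrightarrow>
        (\<Sum>h\<leftarrow>hs. h ** a ** adj h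
                 - smat (1/2) (adj h ** h ** a + a ** (adj h ** h)))) F"
  proof (induction hs)
    case Nil then show ?case by simp
  next
    case (Cons h hs)
    show ?case apply simp
      by (intro tendsto_add Cons tendsto_diff tendsto_smat tendsto_mmul tendsto_const assms)
  qed
  then show ?thesis unfolding lindblad_def
    by (intro tendsto_add tendsto_smat tendsto_diff tendsto_mmul tendsto_const assms)
qed

lemma lindblad_form_tendsto:
  assumes "lindblad_form L" "(A \<longlongrightarrow> a) F"
  shows "((\<lambda>x. L (A x)) \<longlongrightarrow> L a) F"
  using assms tendsto_lindblad unfolding lindblad_form_def by blast



lemma sum_two:
  fixes f :: "'d::finite \<Rightarrow> 'b::comm_monoid_add"
  assumes "i \<noteq> j" "\<And>l. l \<noteq> i \<Longrightarrow> l \<noteq> j \<Longrightarrow> f l = 0"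
  shows "(\<Sum>l\<in>UNIV. f l) = f i + f j"
proof -
  have "(\<Sum>l\<in>UNIV. f l) = (\<Sum>l\<in>{i,j}. f l)"
    by (rule sum.mono_neutral_right) (use assms in auto)
  then show ?thesis using assms by simp
qed

lemma sum_one:
  fixes f :: "'d::finite \<Rightarrow> 'b::comm_monoid_add"
  assumes "\<And>l. l \<noteq> i \<Longrightarrow> f l = 0"
  shows "(\<Sum>l\<in>UNIV. f l) = f i"
proof -
  have "(\<Sum>l\<in>UNIV. f l) = (\<Sum>l\<in>{i}. f l)"
    by (rule sum.mono_neutral_right) (use assms in auto)
  then show ?thesis using assms by simp
qed

lemma cquad_two:
  fixes A :: "'d::finite cmat"
  assumes "i \<noteq> j"
  shows "cquad A (\<chi> l. if l = i then a else if l = j then b else 0) =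
     cnj a * A$i$i * a + cnj a * A$i$j * b + cnj b * A$j$i * a + cnj b * A$j$j * b"
proof -
  define x where "x = (\<chi> l. if l = i then a else if l = j then b else (0::complex))"
  have x0: "\<And>l. l \<noteq> i \<Longrightarrow> l \<noteq> j \<Longrightarrow> x$l = 0" "x$i = a" "x$j = b"
    using assms unfolding x_def by auto
  have inner: "(\<Sum>m\<in>UNIV. cnj(x$l) * A$l$m * x$m) = cnj(x$l)*A$l$i*x$i + cnj(x$l)*A$l$j*x$j" for l
    by (rule sum_two[OF assms]) (simp add: x0)
  have "cquad A x = (\<Sum>l\<in>UNIV. cnj(x$l)*A$l$i*x$i + cnj(x$l)*A$l$j*x$j)"
    unfolding cquad_def inner ..
  also have "\<dots> = (cnj(x$i)*A$i$i*x$i + cnj(x$i)*A$i$j*x$j) + (cnj(x$j)*A$j$i*x$i + cnj(x$j)*A$j$j*x$j)"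
    by (rule sum_two[OF assms]) (simp add: x0)
  finally show ?thesis unfolding x_def[symmetric] using x0 by (simp add: algebra_simps)
qed

lemma cquad_one:
  fixes A :: "'d::finite cmat"
  shows "cquad A (\<chi> l. if l = i then 1 else 0) = A$i$i"
proof -
  define x where "x = (\<chi> l. if l = i then 1 else (0::complex))"
  have x0: "\<And>l. l \<noteq> i \<Longrightarrow> x$l = 0" "x$i = 1"
    unfolding x_def by auto
  have inner: "(\<Sum>m\<in>UNIV. cnj(x$l) * A$l$m * x$m) = cnj(x$l)*A$l$i*x$i" for l
    by (rule sum_one) (simp add: x0)
  have "cquad A x = (\<Sum>l\<in>UNIV. cnj(x$l)*A$l$i*x$i)"
    unfolding cquad_def inner ..
  also have "\<dots> = cnj(x$i)*A$i$i*x$i"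
    by (rule sum_one) (simp add: x0)
  finally show ?thesis unfolding x_def[symmetric] using x0 by simp
qed

lemma herm_entry: "hermitian A \<Longrightarrow> A$j$i = cnj (A$i$j)"
  unfolding hermitian_def adj_def by (metis complex_cnj_cnj vec_lambda_beta)

lemma density_entry_bound:
  fixes A :: "'d::finite cmat"
  assumes "density A"
  shows "norm (A$i$j) \<le> 1"
proof -
  have h: "hermitian A" and q: "\<And>x. Im (cquad A x) = 0 \<and> Re (cquad A x) \<ge> 0" and tr: "ctrace A = 1"
    using assms unfolding density_def psd_def by auto
  have diag: "Re (A$k$k) \<ge> 0" for k using q[of "\<chi> l. if l = k then 1 else 0"] unfolding cquad_one by simp
  have diagIm: "Im (A$k$k) = 0" for k using arg_cong[OF herm_entry[OF h, of k k], of Im] by simp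
  have "(\<Sum>k\<in>UNIV. Re (A$k$k)) = 1" using tr unfolding ctrace_def
    by (metis Re_sum one_complex.simps(1))
  hence le1: "Re (A$k$k) \<le> 1" for k
    using member_le_sum[of k UNIV "\<lambda>k. Re (A$k$k)"] diag by simp
  show ?thesis
  proof (cases "i = j")
    case True
    then show ?thesis using diag[of i] le1[of i] diagIm[of i]
      by (simp add: cmod_eq_Re)
  next
    case False
    define z where "z = A$i$j"
    define t where "t = (cmod z)^2"
    have c: "cquad A (\<chi> l. if l = i then 1 else if l = j then - cnj z else 0) =
       A$i$i - 2 * (z * cnj z) + (z * cnj z) * A$j$j"
      unfolding cquad_two[OF False] using herm_entry[OF h, of i j] z_def
      by (simp add: algebra_simps)
    have zz: "z * cnj z = complex_of_real t" unfolding t_def by (simp add: complex_norm_square[symmetric])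
    have "Re (A$i$i) - 2 * t + t * Re (A$j$j) \<ge> 0"
      using q[of "\<chi> l. if l = i then 1 else if l = j then - cnj z else 0"] unfolding c zz
      by simp
    moreover have "t \<ge> 0" unfolding t_def by simp
    moreover have "t * (1 - Re (A$j$j)) \<ge> 0" using le1[of j] \<open>t \<ge> 0\<close> by simp
    ultimately have "t \<le> 1" using le1[of i] by (simp add: algebra_simps)
    then show ?thesis unfolding t_def z_def
      by (simp add: power_le_one_iff)
  qed
qed

lemma norm_vec_le_sum: "norm (x::'a::real_normed_vector^'n::finite) \<le> (\<Sum>i\<in>UNIV. norm (x$i))"
  by (simp add: norm_vec_def L2_set_le_sum)

lemma density_norm_bound:
  fixes A :: "'d::finite cmat"
  assumes "density A"
  shows "norm A \<le> real (CARD('d)) * real (CARD('d))"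
proof -
  have "norm A \<le> (\<Sum>i\<in>UNIV. norm (A$i))" by (rule norm_vec_le_sum)
  also have "\<dots> \<le> (\<Sum>i\<in>(UNIV::'d set). (\<Sum>j\<in>(UNIV::'d set). 1))"
    apply (rule sum_mono)
    apply (rule order_trans[OF norm_vec_le_sum])
    apply (rule sum_mono)
    using density_entry_bound[OF assms] by blast
  finally show ?thesis by simp
qed



lemma density_limit:
  fixes X :: "nat \<Rightarrow> 'd::finite cmat"
  assumes d: "\<And>n. density (X n)" and lim: "X \<longlonglongrightarrow> l"
  shows "density l"
proof -
  have "(\<lambda>n. adj (X n)) \<longlonglongrightarrow> adj l" by (rule tendsto_adj[OF lim])
  moreover have "adj (X n) = X n" for n using d unfolding density_def psd_def hermitian_def by auto
  ultimately have "adj l = l" using lim LIMSEQ_unique by auto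
  hence h: "hermitian l" unfolding hermitian_def .
  have cq: "(\<lambda>n. cquad (X n) x) \<longlonglongrightarrow> cquad l x" for x
    unfolding cquad_def by (intro tendsto_intros lim)
  have "Im (cquad l x) = 0" for x
  proof -
    have "(\<lambda>n. Im (cquad (X n) x)) \<longlonglongrightarrow> Im (cquad l x)" by (intro tendsto_intros cq)
    moreover have "(\<lambda>n. Im (cquad (X n) x)) = (\<lambda>n. 0)" using d unfolding density_def psd_def by auto
    ultimately have "(\<lambda>n. 0) \<longlonglongrightarrow> Im (cquad l x)" by simp
    then show ?thesis using LIMSEQ_unique[OF _ tendsto_const] by metis
  qed
  moreover have "Re (cquad l x) \<ge> 0" for x
  proof -
    have "(\<lambda>n. Re (cquad (X n) x)) \<longlonglongrightarrow> Re (cquad l x)" by (intro tendsto_intros cq)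
    moreover have "Re (cquad (X n) x) \<ge> 0" for n using d unfolding density_def psd_def by auto
    ultimately show ?thesis by (simp add: LIMSEQ_le_const)
  qed
  moreover have "ctrace l = 1"
  proof -
    have "(\<lambda>n. ctrace (X n)) \<longlonglongrightarrow> ctrace l" unfolding ctrace_def by (intro tendsto_intros lim)
    moreover have "(\<lambda>n. ctrace (X n)) = (\<lambda>n. 1)" using d unfolding density_def by auto
    ultimately have "(\<lambda>n. 1) \<longlonglongrightarrow> ctrace l" by simp
    then show ?thesis using LIMSEQ_unique[OF _ tendsto_const] by metis
  qed
  ultimately show ?thesis using h unfolding density_def psd_def by auto
qed

lemma density_seq_compact: "seq_compact {A :: 'd::finite cmat. density A}"
proof (rule bounded_closed_imp_seq_compact)
  show "bounded {A :: 'd::finite cmat. density A}"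
    unfolding bounded_iff using density_norm_bound by blast
  show "closed {A :: 'd::finite cmat. density A}"
    unfolding closed_sequential_limits using density_limit by blast
qed

lemma herm_mult_zero_inner:
  fixes A B :: "'d::finite cmat"
  assumes "hermitian B" "A ** B = 0"
  shows "A \<bullet> B = 0"
proof -
  have "(A ** B)$i$i = 0" for i using assms by simp
  moreover have "(A ** B)$i$i = (\<Sum>l\<in>UNIV. A$i$l * cnj (B$i$l))" for i
    unfolding matrix_matrix_mult_def vec_lambda_beta
    by (rule sum.cong[OF refl]) (simp only: herm_entry[OF assms(1), of l i for l])
  ultimately have "(\<Sum>l\<in>UNIV. A$i$l * cnj (B$i$l)) = 0" for i
    by metis
  hence "Re (\<Sum>l\<in>UNIV. A$i$l * cnj (B$i$l)) = 0" for i by simp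
  moreover have "A$i$l \<bullet> B$i$l = Re (A$i$l * cnj (B$i$l))" for i l
    by (simp add: inner_complex_def)
  ultimately show ?thesis
    unfolding inner_vec_def by (simp add: Re_sum)
qed

lemma density_nonzero: "density A \<Longrightarrow> A \<noteq> 0"
  unfolding density_def ctrace_def by auto

lemma orth_family_length:
  fixes L :: "'d::finite cmat \<Rightarrow> 'd cmat"
  assumes "orth_invariant_family L \<rho>s"
  shows "length \<rho>s \<le> DIM('d cmat)"
proof -
  have d: "\<And>\<rho>. \<rho> \<in> set \<rho>s \<Longrightarrow> density \<rho>"
   and o: "\<And>j k. j < length \<rho>s \<Longrightarrow> k < length \<rho>s \<Longrightarrow> j \<noteq> k \<Longrightarrow> \<rho>s ! j ** \<rho>s ! k = 0"
    using assms unfolding orth_invariant_family_def by auto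
  have oi: "\<rho>s ! j \<bullet> \<rho>s ! k = 0" if "j < length \<rho>s" "k < length \<rho>s" "j \<noteq> k" for j k
    apply (rule herm_mult_zero_inner[OF _ o[OF that]])
    using d[of "\<rho>s ! k"] that unfolding density_def psd_def by auto
  have "distinct \<rho>s"
    unfolding distinct_conv_nth
  proof (intro allI impI)
    fix j k assume jk: "j < length \<rho>s" "k < length \<rho>s" "j \<noteq> k"
    show "\<rho>s ! j \<noteq> \<rho>s ! k"
    proof
      assume "\<rho>s ! j = \<rho>s ! k"
      with oi[OF jk] have "\<rho>s ! j = 0" by simp
      with density_nonzero d jk(1) show False by (metis nth_mem)
    qed
  qed
  moreover have "independent (set \<rho>s)"
  proof (rule pairwise_orthogonal_independent)
    show "pairwise orthogonal (set \<rho>s)"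
      unfolding pairwise_def orthogonal_def
      by (metis in_set_conv_nth oi)
    show "0 \<notin> set \<rho>s" using d density_nonzero by blast
  qed
  ultimately show ?thesis using independent_bound[of "set \<rho>s"] distinct_card[of \<rho>s] by simp
qed



lemma extract_subseq:
  fixes m :: nat
  assumes K: "seq_compact K" and F: "\<And>k j. j < m \<Longrightarrow> F k j \<in> K"
  shows "\<exists>r l. strict_mono (r::nat\<Rightarrow>nat) \<and> (\<forall>j<m. ((\<lambda>k. F (r k) j) \<longlongrightarrow> l j) sequentially)"
  using F
proof (induction m)
  case 0
  show ?case by (rule exI[of _ id]) (auto simp: strict_mono_def)
next
  case (Suc m)
  then obtain r l where r: "strict_mono (r::nat\<Rightarrow>nat)" and l: "\<forall>j<m. ((\<lambda>k. F (r k) j) \<longlongrightarrow> l j) sequentially"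
    by auto
  have "\<forall>k. F (r k) m \<in> K" using Suc.prems by auto
  from seq_compactE[OF K this] obtain l' r' where r': "strict_mono (r'::nat\<Rightarrow>nat)"
    and l': "((\<lambda>k. F (r k) m) \<circ> r') \<longlonglongrightarrow> l'" by blast
  show ?case
  proof (intro exI conjI allI impI)
    show "strict_mono (r \<circ> r')" using r r' by (rule strict_mono_o)
    fix j assume j: "j < Suc m"
    show "((\<lambda>k. F ((r \<circ> r') k) j) \<longlongrightarrow> (l(m := l')) j) sequentially"
    proof (cases "j = m")
      case True
      then show ?thesis using l' by (simp add: o_def)
    next
      case False
      with j l have "(\<lambda>k. F (r k) j) \<longlonglongrightarrow> l j" by auto
      from LIMSEQ_subseq_LIMSEQ[OF this r'] False show ?thesis by (simp add: o_def)
    qed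
  qed
qed

lemma orth_family_take:
  "orth_invariant_family L \<rho>s \<Longrightarrow> orth_invariant_family L (take n \<rho>s)"
  unfolding orth_invariant_family_def by (auto dest: in_set_takeD)

lemma S_facts:
  fixes L :: "'d::finite cmat \<Rightarrow> 'd cmat"
  defines "S \<equiv> {n. \<exists>\<rho>s. length \<rho>s = n \<and> orth_invariant_family L \<rho>s}"
  shows "max_orth_invariant L \<in> S" "\<And>n. n \<in> S \<Longrightarrow> n \<le> max_orth_invariant L"
proof -
  have fin: "finite S"
    by (rule finite_subset[of _ "{..DIM('d cmat)}"]) (auto simp: S_def dest: orth_family_length)
  have ne: "0 \<in> S" unfolding S_def orth_invariant_family_def by (auto intro: exI[of _ "[]"])
  show "max_orth_invariant L \<in> S" unfolding max_orth_invariant_def S_def[symmetric]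
    using fin ne Max_in by blast
  show "\<And>n. n \<in> S \<Longrightarrow> n \<le> max_orth_invariant L" unfolding max_orth_invariant_def S_def[symmetric]
    using fin by simp
qed

lemma perturbed_tendsto:
  assumes "lindblad_form L0" "lindblad_form L1" "(A \<longlongrightarrow> a) F" "(e \<longlongrightarrow> e0) F"
  shows "((\<lambda>x. perturbed L0 L1 (e x) (A x)) \<longlongrightarrow> perturbed L0 L1 e0 a) F"
  unfolding perturbed_def
  by (intro tendsto_add tendsto_smat lindblad_form_tendsto[OF assms(1)] lindblad_form_tendsto[OF assms(2)]
      tendsto_of_real assms(3,4))

theorem lemma1:
  fixes L0 L1 :: "'d::finite cmat \<Rightarrow> 'd cmat"
  assumes "lindblad_form L0" and "lindblad_form L1"
  shows "\<exists>\<delta>>0. \<forall>\<epsilon>::real. 0 < \<epsilon> \<and> \<epsilon> < \<delta> \<longrightarrow>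
           max_orth_invariant (perturbed L0 L1 \<epsilon>) \<le> max_orth_invariant (perturbed L0 L1 0)"
proof (rule ccontr)
  define N where "N = max_orth_invariant (perturbed L0 L1 0)"
  assume "\<not> ?thesis"
  hence "\<forall>k::nat. \<exists>\<epsilon>. 0 < \<epsilon> \<and> \<epsilon> < inverse (real (Suc k)) \<and> N < max_orth_invariant (perturbed L0 L1 \<epsilon>)"
    unfolding N_def by (metis not_le inverse_positive_iff_positive of_nat_0_less_iff zero_less_Suc)
  then obtain e where e: "\<And>k. 0 < e k" "\<And>k. e k < inverse (real (Suc k))"
     "\<And>k. N < max_orth_invariant (perturbed L0 L1 (e k))"
    by metis
  have "\<exists>\<rho>s. length \<rho>s = Suc N \<and> orth_invariant_family (perturbed L0 L1 (e k)) \<rho>s" for k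
  proof -
    obtain \<rho>s where "length \<rho>s = max_orth_invariant (perturbed L0 L1 (e k))"
      "orth_invariant_family (perturbed L0 L1 (e k)) \<rho>s"
      using S_facts(1)[of "perturbed L0 L1 (e k)"] by blast
    then show ?thesis using e(3)[of k] orth_family_take
      by (intro exI[of _ "take (Suc N) \<rho>s"]) auto
  qed
  then obtain G where G: "\<And>k. length (G k) = Suc N" "\<And>k. orth_invariant_family (perturbed L0 L1 (e k)) (G k)"
    by metis
  have Gd: "density (G k ! j)" "perturbed L0 L1 (e k) (G k ! j) = 0" if "j < Suc N" for k j
    using G[of k] that unfolding orth_invariant_family_def by (metis nth_mem)+
  have Go: "G k ! j ** G k ! j' = 0" if "j < Suc N" "j' < Suc N" "j \<noteq> j'" for k j j'
    using G[of k] that unfolding orth_invariant_family_def by metis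
  obtain r l where r: "strict_mono (r::nat\<Rightarrow>nat)" and l: "\<forall>j<Suc N. ((\<lambda>k. G (r k) ! j) \<longlongrightarrow> l j) sequentially"
    using extract_subseq[OF density_seq_compact, of "Suc N" "\<lambda>k j. G k ! j"] Gd by auto
  have e0: "e \<longlonglongrightarrow> 0"
  proof (rule tendsto_sandwich[of "\<lambda>_. 0" e sequentially "\<lambda>k. inverse (real (Suc k))"])
    show "eventually (\<lambda>n. 0 \<le> e n) sequentially"
      by (intro always_eventually allI) (simp add: less_imp_le e(1))
    show "eventually (\<lambda>n. e n \<le> inverse (real (Suc n))) sequentially"
      by (intro always_eventually allI) (rule less_imp_le[OF e(2)])
    show "(\<lambda>n. inverse (real (Suc n))) \<longlonglongrightarrow> 0" by (rule LIMSEQ_inverse_real_of_nat)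
  qed simp
  have er: "(\<lambda>k. e (r k)) \<longlonglongrightarrow> 0" using LIMSEQ_subseq_LIMSEQ[OF e0 r] by (simp add: o_def)
  define G0 where "G0 = map l [0..<Suc N]"
  have "orth_invariant_family (perturbed L0 L1 0) G0"
    unfolding orth_invariant_family_def
  proof (intro conjI ballI allI impI)
    fix \<rho> assume "\<rho> \<in> set G0"
    then obtain j where j: "j < Suc N" "\<rho> = l j" unfolding G0_def set_map set_upt by auto
    show "density \<rho>" using density_limit[of "\<lambda>k. G (r k) ! j" "l j"] Gd j l by auto
    have "(\<lambda>k. perturbed L0 L1 (e (r k)) (G (r k) ! j)) \<longlonglongrightarrow> perturbed L0 L1 0 (l j)"
      by (rule perturbed_tendsto[OF assms]) (use l j er in auto)
    moreover have "(\<lambda>k. perturbed L0 L1 (e (r k)) (G (r k) ! j)) = (\<lambda>k. 0)" using Gd j by auto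
    ultimately have "(\<lambda>k. 0) \<longlonglongrightarrow> perturbed L0 L1 0 (l j)" by simp
    then show "perturbed L0 L1 0 \<rho> = 0" using j LIMSEQ_unique[OF _ tendsto_const] by metis
  next
    fix j j' assume jj: "j < length G0" "j' < length G0" "j \<noteq> j'"
    hence jj': "j < Suc N" "j' < Suc N" unfolding G0_def by auto
    have "(\<lambda>k. G (r k) ! j ** G (r k) ! j') \<longlonglongrightarrow> l j ** l j'"
      by (rule tendsto_mmul) (use l jj' in auto)
    moreover have "(\<lambda>k. G (r k) ! j ** G (r k) ! j') = (\<lambda>k. 0)" using Go jj' jj(3) by auto
    ultimately have "(\<lambda>k. 0) \<longlonglongrightarrow> l j ** l j'" by simp
    hence "l j ** l j' = 0" using LIMSEQ_unique[OF _ tendsto_const] by metis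
    then show "G0 ! j ** G0 ! j' = 0" using jj' unfolding G0_def by (simp del: upt_Suc)
  qed
  moreover have "length G0 = Suc N" unfolding G0_def by simp
  ultimately have "Suc N \<le> N" using S_facts(2)[of "Suc N" "perturbed L0 L1 0"] unfolding N_def
    by blast
  then show False by simp
qed


end
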